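(* The dimension of $(I_{W_d})_2$ is $d-3$.
   Context: Let $P_d$ be a convex polygon with $d\ge 4$ vertices $v_1,\dots,v_d$ over a field $\mathbb{K}$ with no three edge lines concurrent. With ${\bf v}_i=(v_i,1)$, $\alpha_j=|{\bf v}_{j-1}\,{\bf v}_j\,{\bf v}_{j+1}|$, $\ell_j=|{\bf v}_j\,{\bf v}_{j+1}\,{\bf p}|$, ${\bf p}=(x,y,z)$, $b_i=\alpha_i\prod_{j\ne i-1,i}\ell_j$, the Wachspress surface $W_d$ is the closure of the image of $p\mapsto(b_1,\dots,b_d)$, and $(I_{W_d})_2$ is the space of quadrics in $S=\mathbb{K}[x_1,\ldots,x_d]$ vanishing on it. *)

theory Defs
  imports Main "HOL.Vector_Spaces" "HOL-Library.Function_Algebras"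
begin

text \<open>Vertices of the polygon are v 0, ..., v (d-1); indices are read cyclically mod d.
  Points of the projective plane are triples (x,y,z) over the ordered field 'a.\<close>

definition det3 :: "'a::comm_ring_1 \<times> 'a \<times> 'a \<Rightarrow> 'a \<times> 'a \<times> 'a \<Rightarrow> 'a \<times> 'a \<times> 'a \<Rightarrow> 'a" where
  "det3 u w t = (case u of (a1,a2,a3) \<Rightarrow> case w of (b1,b2,b3) \<Rightarrow> case t of (c1,c2,c3) \<Rightarrow>
      a1*(b2*c3 - b3*c2) - a2*(b1*c3 - b3*c1) + a3*(b1*c2 - b2*c1))"

definition vbold :: "(nat \<Rightarrow> 'a \<times> 'a) \<Rightarrow> nat \<Rightarrow> nat \<Rightarrow> 'a::comm_ring_1 \<times> 'a \<times> 'a" where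
  "vbold v d i = (fst (v (i mod d)), snd (v (i mod d)), 1)"

definition walpha :: "(nat \<Rightarrow> 'a \<times> 'a) \<Rightarrow> nat \<Rightarrow> nat \<Rightarrow> 'a::comm_ring_1" where
  "walpha v d j = det3 (vbold v d (j + d - 1)) (vbold v d j) (vbold v d (j + 1))"

definition well :: "(nat \<Rightarrow> 'a \<times> 'a) \<Rightarrow> nat \<Rightarrow> nat \<Rightarrow> 'a \<times> 'a \<times> 'a \<Rightarrow> 'a::comm_ring_1" where
  "well v d j p = det3 (vbold v d j) (vbold v d (j + 1)) p"

definition wb :: "(nat \<Rightarrow> 'a \<times> 'a) \<Rightarrow> nat \<Rightarrow> nat \<Rightarrow> 'a \<times> 'a \<times> 'a \<Rightarrow> 'a::comm_ring_1" where
  "wb v d i p = walpha v d i * (\<Prod>j \<in> {0..<d} - {(i + d - 1) mod d, i mod d}. well v d j p)"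

definition convex_polygon :: "(nat \<Rightarrow> 'a::linordered_field \<times> 'a) \<Rightarrow> nat \<Rightarrow> bool" where
  "convex_polygon v d \<longleftrightarrow> 3 \<le> d \<and>
     ((\<forall>j<d. \<forall>k<d. k \<noteq> j \<and> k \<noteq> (j + 1) mod d \<longrightarrow> well v d j (vbold v d k) > 0) \<or>
      (\<forall>j<d. \<forall>k<d. k \<noteq> j \<and> k \<noteq> (j + 1) mod d \<longrightarrow> well v d j (vbold v d k) < 0))"

text \<open>No three edge lines are concurrent (in the projective plane): three distinct edge
  forms have no common nonzero zero.\<close>
definition no_three_concurrent :: "(nat \<Rightarrow> 'a::comm_ring_1 \<times> 'a) \<Rightarrow> nat \<Rightarrow> bool" where
  "no_three_concurrent v d \<longleftrightarrow>
     (\<forall>i<d. \<forall>j<d. \<forall>k<d. i \<noteq> j \<and> j \<noteq> k \<and> i \<noteq> k \<longrightarrow>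
        (\<forall>p::'a \<times> 'a \<times> 'a. well v d i p = 0 \<and> well v d j p = 0 \<and> well v d k p = 0 \<longrightarrow> p = (0,0,0)))"

text \<open>A quadric in x_0..x_{d-1} is given by its coefficients Q(i,j), i \<le> j < d
  (coefficient of x_i x_j); all other entries are 0.\<close>
definition quad_eval :: "nat \<Rightarrow> (nat \<times> nat \<Rightarrow> 'a) \<Rightarrow> (nat \<Rightarrow> 'a) \<Rightarrow> 'a::comm_ring_1" where
  "quad_eval d Q X = (\<Sum>(i,j) \<in> {(i,j). i \<le> j \<and> j < d}. Q (i,j) * X i * X j)"

definition quadric :: "nat \<Rightarrow> (nat \<times> nat \<Rightarrow> 'a::zero) \<Rightarrow> bool" where
  "quadric d Q \<longleftrightarrow> (\<forall>i j. \<not> (i \<le> j \<and> j < d) \<longrightarrow> Q (i,j) = 0)"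

text \<open>(I_{W_d})_2: quadrics vanishing on the image of p \<mapsto> (b_1(p),...,b_d(p))
  (equivalently on its Zariski closure).\<close>
definition IW2 :: "(nat \<Rightarrow> 'a \<times> 'a) \<Rightarrow> nat \<Rightarrow> (nat \<times> nat \<Rightarrow> 'a::comm_ring_1) set" where
  "IW2 v d = {Q. quadric d Q \<and> (\<forall>p. quad_eval d Q (\<lambda>i. wb v d i p) = 0)}"

definition coeff_scale :: "'a::times \<Rightarrow> (nat \<times> nat \<Rightarrow> 'a) \<Rightarrow> (nat \<times> nat \<Rightarrow> 'a)" where
  "coeff_scale c Q = (\<lambda>ij. c * Q ij)"

end

theory Submission
  imports Defs "HOL-Computational_Algebra.Polynomial"
begin

lemma sum_fun_apply: "(\<Sum>x\<in>A. f x) y = (\<Sum>x\<in>A. f x y)"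
  by (induct A rule: infinite_finite_induct) auto

lemma det3_same12: "det3 a a c = 0"
  by (cases a; cases c) (auto simp: det3_def algebra_simps)
lemma det3_same13: "det3 a b a = 0"
  by (cases a; cases b) (auto simp: det3_def algebra_simps)
lemma det3_same23: "det3 a b b = 0"
  by (cases a; cases b) (auto simp: det3_def algebra_simps)

lemma vbold_mod: "vbold v d (i mod d) = vbold v d i"
  by (simp add: vbold_def)

lemma well_mod: "well v d (j mod d) = well v d j"
proof -
  have "vbold v d (j mod d + 1) = vbold v d (j + 1)"
    by (simp add: vbold_def mod_Suc_eq)
  then show ?thesis by (simp add: well_def vbold_mod fun_eq_iff)
qed

lemma well_lin: "well v d j (x,y,z) = well v d j (1,0,0) * x + well v d j (0,1,0) * y + well v d j (0,0,1) * z"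
  by (auto simp: well_def det3_def split: prod.splits) (simp add: algebra_simps)

definition padd :: "'a::comm_ring_1 \<times> 'a \<times> 'a \<Rightarrow> 'a \<times> 'a \<times> 'a \<Rightarrow> 'a \<times> 'a \<times> 'a" where
  "padd p q = (fst p + fst q, fst (snd p) + fst (snd q), snd (snd p) + snd (snd q))"
definition psc :: "'a::comm_ring_1 \<Rightarrow> 'a \<times> 'a \<times> 'a \<Rightarrow> 'a \<times> 'a \<times> 'a" where
  "psc t p = (t * fst p, t * fst (snd p), t * snd (snd p))"

lemma well_padd: "well v d j (padd p q) = well v d j p + well v d j q"
  by (cases p; cases q) (simp add: well_def vbold_def det3_def padd_def algebra_simps)
lemma well_psc: "well v d j (psc t p) = t * well v d j p"
  by (cases p) (simp add: well_def vbold_def det3_def psc_def algebra_simps)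

lemma well_zero_V1: "well v d j (vbold v d j) = 0"
  by (simp add: well_def det3_same13)
lemma well_zero_V2: "well v d j (vbold v d (j+1)) = 0"
  by (simp add: well_def det3_same23)

lemma pred_mod: "0 < (i::nat) \<Longrightarrow> i < d \<Longrightarrow> (i + d - 1) mod d = i - 1"
proof -
  assume a: "0 < i" "i < d"
  then have "i + d - 1 = (i - 1) + d" by linarith
  then have "(i + d - 1) mod d = (i - 1) mod d" by simp
  then show ?thesis using a by simp
qed
lemma pred_mod0: "0 < (d::nat) \<Longrightarrow> (0 + d - 1) mod d = d - 1"
  by simp



definition fsc :: "'a::field \<Rightarrow> ('b \<Rightarrow> 'a) \<Rightarrow> ('b \<Rightarrow> 'a)" where
  "fsc c f = (\<lambda>p. c * f p)"

lemma fsc_vs: "vector_space (fsc :: 'a::field \<Rightarrow> ('b \<Rightarrow> 'a) \<Rightarrow> ('b \<Rightarrow> 'a))"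
  by unfold_locales (auto simp: fsc_def fun_eq_iff algebra_simps)

lemma cs_vs: "vector_space (coeff_scale :: 'a::field \<Rightarrow> (nat \<times> nat \<Rightarrow> 'a) \<Rightarrow> _)"
  by unfold_locales (auto simp: coeff_scale_def fun_eq_iff algebra_simps)

interpretation FS: vector_space "fsc :: 'a::field \<Rightarrow> ('b \<Rightarrow> 'a) \<Rightarrow> ('b \<Rightarrow> 'a)"
  by (rule fsc_vs)

interpretation CS: vector_space "coeff_scale :: 'a::field \<Rightarrow> (nat \<times> nat \<Rightarrow> 'a) \<Rightarrow> _"
  by (rule cs_vs)

definition mon :: "nat \<Rightarrow> nat \<times> nat \<Rightarrow> 'a::field \<times> 'a \<times> 'a \<Rightarrow> 'a" where
  "mon n ab = (\<lambda>(x,y,z). x ^ fst ab * y ^ snd ab * z ^ (n - fst ab - snd ab))"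

definition MonI :: "nat \<Rightarrow> (nat \<times> nat) set" where "MonI n = {(a,b). a + b \<le> n}"

lemma MonI_fin: "finite (MonI n)"
  by (rule finite_subset[of _ "{..n} \<times> {..n}"]) (auto simp: MonI_def)

definition Hn :: "nat \<Rightarrow> ('a::field \<times> 'a \<times> 'a \<Rightarrow> 'a) set" where
  "Hn n = FS.span (mon n ` MonI n)"

lemma mul_lin:
  fixes g :: "'a::field \<times> 'a \<times> 'a \<Rightarrow> 'a"
  assumes g: "\<And>x y z. g (x,y,z) = c1 * x + c2 * y + c3 * z"
    and f: "f \<in> Hn n"
  shows "(\<lambda>p. g p * f p) \<in> Hn (Suc n)"
proof -
  have gm: "(\<lambda>p. g p * mon n ab p) \<in> Hn (Suc n)" if ab: "ab \<in> MonI n" for ab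
  proof -
    obtain a b where abe: "ab = (a,b)" by (cases ab)
    have le: "a + b \<le> n" using ab abe by (simp add: MonI_def)
    have eq: "(\<lambda>p. g p * mon n ab p) = fsc c1 (mon (Suc n) (Suc a, b)) + (fsc c2 (mon (Suc n) (a, Suc b)) + fsc c3 (mon (Suc n) (a, b)))"
    proof
      fix p :: "'a \<times> 'a \<times> 'a"
      obtain x y z where pe: "p = (x,y,z)" by (cases p)
      have e1: "Suc n - Suc a - b = n - a - b" by simp
      have e2: "Suc n - a - Suc b = n - a - b" by simp
      have e3: "Suc n - (a + b) = Suc (n - (a + b))" using le by simp
      show "g p * mon n ab p = (fsc c1 (mon (Suc n) (Suc a, b)) + (fsc c2 (mon (Suc n) (a, Suc b)) + fsc c3 (mon (Suc n) (a, b)))) p"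
        by (simp add: pe g abe mon_def fsc_def e1 e2 e3 algebra_simps)
    qed
    moreover have "mon (Suc n) (Suc a, b) \<in> mon (Suc n) ` MonI (Suc n)" "mon (Suc n) (a, Suc b) \<in> mon (Suc n) ` MonI (Suc n)"
        "mon (Suc n) (a, b) \<in> mon (Suc n) ` MonI (Suc n)"
      using le by (auto simp: MonI_def)
    then have m: "mon (Suc n) (Suc a, b) \<in> Hn (Suc n)" "mon (Suc n) (a, Suc b) \<in> Hn (Suc n)"
        "mon (Suc n) (a, b) \<in> Hn (Suc n)" unfolding Hn_def by (auto intro: FS.span_base)
    show ?thesis unfolding eq using m unfolding Hn_def
      by (intro FS.span_add FS.span_scale)
  qed
  from f have "f \<in> FS.span (mon n ` MonI n)" by (simp add: Hn_def)
  then show ?thesis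
  proof (induct rule: FS.span_induct_alt)
    case base
    have "(\<lambda>p. g p * (0::'a\<times>'a\<times>'a\<Rightarrow>'a) p) = 0" by (simp add: fun_eq_iff)
    then show ?case by (simp add: Hn_def FS.span_zero)
  next
    case (step c x y)
    then obtain ab where ab: "ab \<in> MonI n" "x = mon n ab" by auto
    have "(\<lambda>p. g p * (fsc c x + y) p) = fsc c (\<lambda>p. g p * x p) + (\<lambda>p. g p * y p)"
      by (simp add: fun_eq_iff fsc_def algebra_simps)
    moreover have "(\<lambda>p. g p * x p) \<in> Hn (Suc n)" using gm[OF ab(1)] ab(2) by simp
    ultimately show ?case using step(2) unfolding Hn_def
      by (simp only:) (intro FS.span_add FS.span_scale)
  qed
qed

locale wach =
  fixes v :: "nat \<Rightarrow> 'a::linordered_field \<times> 'a" and d :: nat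
  assumes d4: "4 \<le> d" and cvx: "convex_polygon v d" and n3: "no_three_concurrent v d"
begin

abbreviation V where "V k \<equiv> vbold v d k"
abbreviation l where "l j p \<equiv> well v d j p"

definition sg :: 'a where
  "sg = (if (\<forall>j<d. \<forall>k<d. k \<noteq> j \<and> k \<noteq> (j + 1) mod d \<longrightarrow> well v d j (vbold v d k) > 0) then 1 else -1)"

lemma sg_pos: "j < d \<Longrightarrow> k < d \<Longrightarrow> k \<noteq> j \<Longrightarrow> k \<noteq> (j + 1) mod d \<Longrightarrow> 0 < sg * l j (V k)"
  using cvx unfolding convex_polygon_def sg_def
  by (auto simp: neg_less_0_iff_less)

lemma sg_nz: "sg \<noteq> 0" by (simp add: sg_def)

lemma nx_eq: "i < d \<Longrightarrow> Suc i mod d = (if i = d - 1 then 0 else Suc i)"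
  using d4 by auto

lemma pv_eq: "i < d \<Longrightarrow> (i + d - Suc 0) mod d = (if i = 0 then d - 1 else i - 1)"
  using d4 pred_mod[of i d] by auto

lemma l_V_zero: "l j (V k) = 0" if "j < d" "k < d" "k = j \<or> k = (j + 1) mod d"
proof -
  have "V ((j+1) mod d) = V (j + 1)" by (rule vbold_mod)
  then show ?thesis using that well_zero_V1 well_zero_V2 by metis
qed

lemma l_V_iff: "j < d \<Longrightarrow> k < d \<Longrightarrow> l j (V k) = 0 \<longleftrightarrow> (k = j \<or> k = (j + 1) mod d)"
  using l_V_zero sg_pos by (metis less_irrefl mult_zero_right)

lemma l_V_sg: "j < d \<Longrightarrow> k < d \<Longrightarrow> 0 \<le> sg * l j (V k)"
  using l_V_zero sg_pos by (metis mult_zero_right order.refl less_imp_le)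

lemma alpha_nz: "i < d \<Longrightarrow> walpha v d i \<noteq> 0"
proof -
  assume i: "i < d"
  have "walpha v d i = well v d (i + d - 1) (V (i + 1))"
  proof -
    have "V (i + d - 1 + 1) = V i"
      using i d4 by (simp add: vbold_def)
    then show ?thesis by (simp add: walpha_def well_def)
  qed
  also have "\<dots> = l ((i + d - 1) mod d) (V ((i+1) mod d))"
    by (simp add: well_mod vbold_mod)
  finally have e: "walpha v d i = l ((i + d - 1) mod d) (V ((i+1) mod d))" .
  have "l ((i + d - 1) mod d) (V ((i+1) mod d)) \<noteq> 0"
    apply (subst l_V_iff)
    using i d4 by (auto simp: nx_eq pv_eq split: if_splits)
  then show ?thesis using e by simp
qed


definition nx where "nx i = (if i = d - 1 then 0 else Suc i)"
definition pv where "pv i = (if i = 0 then d - 1 else i - 1)"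

lemma nx_mod: "i < d \<Longrightarrow> Suc i mod d = nx i" using nx_eq nx_def by simp
lemma pv_mod: "i < d \<Longrightarrow> (i + d - Suc 0) mod d = pv i" using pv_eq pv_def by simp
lemma nx_lt: "i < d \<Longrightarrow> nx i < d" using d4 by (auto simp: nx_def)
lemma pv_lt: "i < d \<Longrightarrow> pv i < d" using d4 by (auto simp: pv_def)
lemma nx_pv: "j < d \<Longrightarrow> m < d \<Longrightarrow> nx j = m \<longleftrightarrow> j = pv m"
  using d4 by (auto simp: nx_def pv_def)
lemma pv_inj: "i < d \<Longrightarrow> m < d \<Longrightarrow> pv i = pv m \<longleftrightarrow> i = m"
  using d4 by (auto simp: pv_def)
lemma pv_neq: "i < d \<Longrightarrow> pv i \<noteq> i" using d4 by (auto simp: pv_def)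
lemma pvpv_neq: "i < d \<Longrightarrow> pv (pv i) \<noteq> i" using d4 by (auto simp: pv_def)
lemma nx_neq: "i < d \<Longrightarrow> nx i \<noteq> i" using d4 by (auto simp: nx_def)

lemma l_V_iff': "j < d \<Longrightarrow> k < d \<Longrightarrow> l j (V k) = 0 \<longleftrightarrow> (j = k \<or> j = pv k)"
  using l_V_iff nx_mod nx_pv by (metis Suc_eq_plus1)

lemma wb_eq: "i < d \<Longrightarrow> wb v d i p = walpha v d i * (\<Prod>j \<in> {0..<d} - {pv i, i}. l j p)"
  by (simp add: wb_def pv_mod)

lemma wb_zero_iff: "i < d \<Longrightarrow> wb v d i p = 0 \<longleftrightarrow> (\<exists>j<d. j \<noteq> pv i \<and> j \<noteq> i \<and> l j p = 0)"
  using alpha_nz by (auto simp: wb_eq)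

lemma wbV: "i < d \<Longrightarrow> m < d \<Longrightarrow> wb v d i (V m) = 0 \<longleftrightarrow> i \<noteq> m"
proof -
  assume i: "i < d" and m: "m < d"
  show ?thesis
  proof
    assume "wb v d i (V m) = 0"
    then obtain j where "j < d" "j \<noteq> pv i" "j \<noteq> i" "l j (V m) = 0" using wb_zero_iff i by blast
    then show "i \<noteq> m" using l_V_iff' m by auto
  next
    assume ne: "i \<noteq> m"
    show "wb v d i (V m) = 0"
    proof (cases "m = pv i")
      case True
      have "pv m \<noteq> pv i" using pv_inj ne i m by metis
      moreover have "pv m \<noteq> i" using True pvpv_neq i by simp
      moreover have "l (pv m) (V m) = 0" using l_V_iff' pv_lt m by blast
      ultimately show ?thesis using wb_zero_iff i pv_lt m by blast
    next
      case False
      moreover have "l m (V m) = 0" using l_V_iff' m by blast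
      ultimately show ?thesis using wb_zero_iff i ne m by blast
    qed
  qed
qed

definition pm where "pm m = padd (V m) (V (nx m))"

lemma l_pm: "j < d \<Longrightarrow> m < d \<Longrightarrow> l j (pm m) = 0 \<longleftrightarrow> j = m"
proof -
  assume j: "j < d" and m: "m < d"
  have e: "l j (pm m) = l j (V m) + l j (V (nx m))" by (simp add: pm_def well_padd)
  have a: "0 \<le> sg * l j (V m)" "0 \<le> sg * l j (V (nx m))" using l_V_sg j m nx_lt by auto
  show ?thesis
  proof
    assume z: "l j (pm m) = 0"
    have "sg * l j (V m) + sg * l j (V (nx m)) = sg * (l j (V m) + l j (V (nx m)))" by (simp add: algebra_simps)
    then have "sg * l j (V m) + sg * l j (V (nx m)) = 0" using z e by simp
    then have "l j (V m) = 0" "l j (V (nx m)) = 0" using a sg_nz by (auto simp: add_nonneg_eq_0_iff)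
    then have "(j = m \<or> j = pv m)" "(j = nx m \<or> j = pv (nx m))" using l_V_iff' j m nx_lt by auto
    moreover have "pv (nx m) = m" using nx_pv m nx_lt by metis
    moreover have "pv m \<noteq> nx m" using d4 m by (auto simp: pv_def nx_def)
    ultimately show "j = m" by auto
  next
    assume "j = m"
    moreover have "pv (nx m) = m" using nx_pv m nx_lt by metis
    moreover have "l m (V m) = 0" "l m (V (nx m)) = 0" using l_V_iff' m nx_lt \<open>pv (nx m) = m\<close> by (metis, metis)
    ultimately show "l j (pm m) = 0" using e by simp
  qed
qed

lemma wb_pm: "i < d \<Longrightarrow> m < d \<Longrightarrow> wb v d i (pm m) = 0 \<longleftrightarrow> (i \<noteq> m \<and> i \<noteq> nx m)"
proof -
  assume i: "i < d" and m: "m < d"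
  have "wb v d i (pm m) = 0 \<longleftrightarrow> (m \<noteq> pv i \<and> m \<noteq> i)"
    using wb_zero_iff[OF i] l_pm m i by auto
  also have "\<dots> \<longleftrightarrow> (i \<noteq> m \<and> i \<noteq> nx m)" using nx_pv i m by metis
  finally show ?thesis .
qed


definition DD where "DD = {(i,j). i \<le> j \<and> j < d}"
lemma DD_fin: "finite DD"
  by (rule finite_subset[of _ "{..<d} \<times> {..<d}"]) (auto simp: DD_def)

lemma qe_single:
  assumes "(a,b) \<in> DD" "\<And>i j. (i,j) \<in> DD \<Longrightarrow> (i,j) \<noteq> (a,b) \<Longrightarrow> Q (i,j) * X i * X j = 0"
  shows "quad_eval d Q X = Q (a,b) * X a * X b"
proof -
  have "quad_eval d Q X = (\<Sum>x\<in>DD. (\<lambda>(i,j). Q (i,j) * X i * X j) x)"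
    by (simp add: quad_eval_def DD_def)
  also have "\<dots> = (\<Sum>x\<in>{(a,b)}. (\<lambda>(i,j). Q (i,j) * X i * X j) x)"
    by (rule sum.mono_neutral_right) (use DD_fin assms in auto)
  finally show ?thesis by simp
qed

lemma IW_diag: "Q \<in> IW2 v d \<Longrightarrow> m < d \<Longrightarrow> Q (m,m) = 0"
proof -
  assume Q: "Q \<in> IW2 v d" and m: "m < d"
  have "quad_eval d Q (\<lambda>i. wb v d i (V m)) = Q (m,m) * wb v d m (V m) * wb v d m (V m)"
    by (rule qe_single) (use m wbV in \<open>auto simp: DD_def\<close>)
  moreover have "quad_eval d Q (\<lambda>i. wb v d i (V m)) = 0" using Q unfolding IW2_def mem_Collect_eq by blast
  moreover have "wb v d m (V m) \<noteq> 0" using wbV m by simp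
  ultimately show ?thesis by simp
qed

lemma IW_adj: "Q \<in> IW2 v d \<Longrightarrow> m < d \<Longrightarrow> Q (min m (nx m), max m (nx m)) = 0"
proof -
  assume Q: "Q \<in> IW2 v d" and m: "m < d"
  define n where "n = nx m"
  have n: "n < d" "n \<noteq> m" using nx_lt nx_neq m n_def by auto
  have "quad_eval d Q (\<lambda>i. wb v d i (pm m)) = Q (min m n, max m n) * wb v d (min m n) (pm m) * wb v d (max m n) (pm m)"
  proof (rule qe_single)
    show "(min m n, max m n) \<in> DD" using m n by (auto simp: DD_def)
  next
    fix i j assume ij: "(i,j) \<in> DD" "(i,j) \<noteq> (min m n, max m n)"
    show "Q (i,j) * wb v d i (pm m) * wb v d j (pm m) = 0"
    proof (cases "i \<in> {m,n} \<and> j \<in> {m,n}")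
      case True
      then have "i = j" using ij n by (cases "m \<le> n") (auto simp: DD_def min_def max_def)
      then show ?thesis using IW_diag Q ij by (auto simp: DD_def)
    next
      case False
      then show ?thesis using wb_pm ij m by (auto simp: DD_def n_def)
    qed
  qed
  moreover have "quad_eval d Q (\<lambda>i. wb v d i (pm m)) = 0" using Q unfolding IW2_def mem_Collect_eq by blast
  moreover have "wb v d (min m n) (pm m) \<noteq> 0" "wb v d (max m n) (pm m) \<noteq> 0"
    using wb_pm m n by (auto simp: n_def min_def max_def)
  ultimately show ?thesis by (simp add: n_def)
qed

definition PP where "PP = {(i,k). i + 2 \<le> k \<and> k < d \<and> \<not> (i = 0 \<and> k = d - 1)}"

lemma IW_supp: "Q \<in> IW2 v d \<Longrightarrow> x \<notin> PP \<Longrightarrow> Q x = 0"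
proof -
  assume Q: "Q \<in> IW2 v d" and x: "x \<notin> PP"
  obtain i k where xe: "x = (i,k)" by (cases x)
  show ?thesis
  proof (cases "i \<le> k \<and> k < d")
    case False
    then show ?thesis using Q by (auto simp: IW2_def quadric_def xe)
  next
    case True
    have "i = k \<or> k = i + 1 \<or> (i = 0 \<and> k = d - 1)" using x xe True unfolding PP_def by auto
    then consider "i = k" | "k = i + 1" | "i = 0 \<and> k = d - 1" by blast
    then show ?thesis
    proof cases
      case 1 then show ?thesis using IW_diag Q True xe by simp
    next
      case 2
      then have "nx i = k" using True by (auto simp: nx_def)
      then show ?thesis using IW_adj[OF Q, of i] True 2 xe by simp
    next
      case 3
      then have "nx (d - 1) = 0" by (simp add: nx_def)
      then show ?thesis using IW_adj[OF Q, of "d - 1"] d4 3 xe by simp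
    qed
  qed
qed


definition EE where "EE x = {pv (fst x), fst x, pv (snd x), snd x}"
definition mf where "mf x p = (\<Prod>j \<in> {0..<d} - EE x. l j p)"
definition Lf where "Lf p = (\<Prod>j \<in> {0..<d}. l j p)"

lemma PP_disj: "(i,k) \<in> PP \<Longrightarrow> {pv i, i} \<inter> {pv k, k} = {}"
  using d4 by (auto simp: PP_def pv_def)

lemma wb_prod: assumes x: "(i,k) \<in> PP"
  shows "wb v d i p * wb v d k p = walpha v d i * walpha v d k * (Lf p * mf (i,k) p)"
proof -
  have ik: "i < d" "k < d" using x by (auto simp: PP_def)
  define A where "A = {0..<d::nat}"
  define Ei where "Ei = {pv i, i}"
  define Ek where "Ek = {pv k, k}"
  define f where "f j = l j p" for j
  have sub: "Ei \<subseteq> A" "Ek \<subseteq> A" using ik pv_lt by (auto simp: A_def Ei_def Ek_def)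
  have dj: "Ei \<inter> Ek = {}" using PP_disj x by (simp add: Ei_def Ek_def)
  let ?M = "A - (Ei \<union> Ek)"
  have fin: "finite A" "finite Ei" "finite Ek" "finite ?M" by (auto simp: A_def Ei_def Ek_def)
  have e1: "A - Ei = ?M \<union> Ek" using sub dj by auto
  have e2: "A - Ek = ?M \<union> Ei" using sub dj by auto
  have e3: "A = ?M \<union> (Ei \<union> Ek)" using sub by auto
  have p1: "prod f (A - Ei) = prod f ?M * prod f Ek"
    unfolding e1 by (rule prod.union_disjoint) (use fin in auto)
  have p2: "prod f (A - Ek) = prod f ?M * prod f Ei"
    unfolding e2 by (rule prod.union_disjoint) (use fin in auto)
  have p3: "prod f A = prod f ?M * (prod f Ei * prod f Ek)"
    apply (subst e3)
    apply (subst prod.union_disjoint)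
    using fin dj by (auto simp: prod.union_disjoint)
  have EEe: "EE (i,k) = Ei \<union> Ek" by (auto simp: EE_def Ei_def Ek_def)
  show ?thesis
    using p1 p2 p3 ik
    by (simp add: wb_eq Lf_def mf_def EEe A_def[symmetric] Ei_def[symmetric] Ek_def[symmetric] f_def[abs_def] algebra_simps)
qed

definition Wp where "Wp = ((\<Sum>k<d. fst (V k)), (\<Sum>k<d. fst (snd (V k))), (\<Sum>k<d. snd (snd (V k))))"

lemma l_Wp: "j < d \<Longrightarrow> l j Wp \<noteq> 0"
proof -
  assume j: "j < d"
  have "l j Wp = (\<Sum>k<d. l j (V k))"
    apply (simp add: Wp_def)
    apply (subst well_lin)
    apply (subst (2) well_lin)
    apply (simp add: sum_distrib_left sum.distrib)
    apply (subst well_lin[of v d j "fst (V k)" "fst (snd (V k))" "snd (snd (V k))" for k, simplified])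
    apply (simp add: sum.distrib algebra_simps)
    done
  then have e: "sg * l j Wp = (\<Sum>k<d. sg * l j (V k))" by (simp add: sum_distrib_left)
  define k0 where "k0 = nx (nx j)"
  have k0: "k0 < d" "k0 \<noteq> j" "k0 \<noteq> Suc j mod d" using j d4 nx_mod
    by (auto simp: k0_def nx_def)
  have "0 < (\<Sum>k<d. sg * l j (V k))"
    by (rule sum_pos2[of _ k0]) (use k0 sg_pos l_V_sg j in auto)
  then show ?thesis using e by auto
qed

lemma l_line: "l j (padd p (psc t Wp)) = poly [:l j p, l j Wp:] t"
  by (simp add: well_padd well_psc)

lemma cancel_L:
  assumes fX: "finite X"
    and h: "\<And>p. Lf p * (\<Sum>x\<in>X. c x * (\<Prod>j\<in>J x. l j p)) = 0"
  shows "(\<Sum>x\<in>X. c x * (\<Prod>j\<in>J x. l j p)) = 0"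
proof -
  define lp where "lp j = [:l j p, l j Wp:]" for j
  define g where "g = (\<Sum>x\<in>X. smult (c x) (\<Prod>j\<in>J x. lp j))"
  define L where "L = (\<Prod>j\<in>{0..<d}. lp j)"
  have pg: "poly g t = (\<Sum>x\<in>X. c x * (\<Prod>j\<in>J x. l j (padd p (psc t Wp))))" for t
    by (simp add: g_def poly_sum poly_prod lp_def l_line)
  have pL: "poly L t = Lf (padd p (psc t Wp))" for t
    by (simp add: L_def Lf_def poly_prod lp_def l_line)
  have "poly (L * g) = poly 0"
    using h by (simp add: fun_eq_iff pg pL)
  then have "L * g = 0" by (simp only: poly_eq_poly_eq_iff)
  moreover have "L \<noteq> 0" using l_Wp by (simp add: L_def lp_def)
  ultimately have "g = 0" by simp
  then have "poly g 0 = 0" by simp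
  moreover have "padd p (psc 0 Wp) = p" by (cases p) (simp add: padd_def psc_def)
  ultimately show ?thesis using pg[of 0] by simp
qed


definition aa where "aa x = walpha v d (fst x) * walpha v d (snd x)"
definition Phi where "Phi Q p = (\<Sum>x\<in>PP. (Q x * aa x) * mf x p)"

lemma PP_sub: "PP \<subseteq> DD" by (auto simp: PP_def DD_def)
lemma PP_fin: "finite PP" using DD_fin PP_sub finite_subset by blast

lemma qe_PP: assumes "\<And>x. x \<notin> PP \<Longrightarrow> Q x = 0"
  shows "quad_eval d Q (\<lambda>i. wb v d i p) = Lf p * Phi Q p"
proof -
  have "quad_eval d Q (\<lambda>i. wb v d i p) = (\<Sum>x\<in>DD. (\<lambda>(i,j). Q (i,j) * wb v d i p * wb v d j p) x)"
    by (simp add: quad_eval_def DD_def)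
  also have "\<dots> = (\<Sum>x\<in>PP. (\<lambda>(i,j). Q (i,j) * wb v d i p * wb v d j p) x)"
    by (rule sum.mono_neutral_right) (use DD_fin PP_sub assms in auto)
  also have "\<dots> = (\<Sum>x\<in>PP. Lf p * ((Q x * aa x) * mf x p))"
    by (rule sum.cong) (auto simp: wb_prod[simplified mult.assoc] aa_def algebra_simps)
  also have "\<dots> = Lf p * Phi Q p" by (simp add: Phi_def sum_distrib_left)
  finally show ?thesis .
qed

lemma IW2_char: "Q \<in> IW2 v d \<longleftrightarrow> (\<forall>x. x \<notin> PP \<longrightarrow> Q x = 0) \<and> (\<forall>p. Phi Q p = 0)"
proof
  assume Q: "Q \<in> IW2 v d"
  have s: "\<forall>x. x \<notin> PP \<longrightarrow> Q x = 0" using IW_supp Q by blast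
  have "Lf p * Phi Q p = 0" for p
    using qe_PP[of Q p] s Q unfolding IW2_def mem_Collect_eq by auto
  then have "Phi Q p = 0" for p
    using cancel_L[OF PP_fin, of "\<lambda>x. Q x * aa x" "\<lambda>x. {0..<d} - EE x" p]
    by (simp add: Phi_def mf_def)
  then show "(\<forall>x. x \<notin> PP \<longrightarrow> Q x = 0) \<and> (\<forall>p. Phi Q p = 0)" using s by blast
next
  assume h: "(\<forall>x. x \<notin> PP \<longrightarrow> Q x = 0) \<and> (\<forall>p. Phi Q p = 0)"
  have "quadric d Q" unfolding quadric_def using h PP_sub by (auto simp: DD_def)
  moreover have "quad_eval d Q (\<lambda>i. wb v d i p) = 0" for p using qe_PP[of Q p] h by auto
  ultimately show "Q \<in> IW2 v d" by (simp add: IW2_def)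
qed

lemma exq: assumes a: "a < d" and b: "b < d" and ab: "a \<noteq> b"
  shows "\<exists>q. l a q = 0 \<and> l b q = 0 \<and> (\<forall>j<d. j \<noteq> a \<and> j \<noteq> b \<longrightarrow> l j q \<noteq> 0)"
proof -
  define a1 where "a1 = l a (1,0,0)"
  define a2 where "a2 = l a (0,1,0)"
  define a3 where "a3 = l a (0,0,1)"
  define b1 where "b1 = l b (1,0,0)"
  define b2 where "b2 = l b (0,1,0)"
  define b3 where "b3 = l b (0,0,1)"
  have la: "l a (x,y,z) = a1 * x + a2 * y + a3 * z" for x y z
    unfolding a1_def a2_def a3_def by (rule well_lin)
  have lb: "l b (x,y,z) = b1 * x + b2 * y + b3 * z" for x y z
    unfolding b1_def b2_def b3_def by (rule well_lin)
  have anz: "\<not> (a1 = 0 \<and> a2 = 0 \<and> a3 = 0)"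
  proof
    assume z: "a1 = 0 \<and> a2 = 0 \<and> a3 = 0"
    define k where "k = nx (nx a)"
    have k: "k < d" "k \<noteq> a" "k \<noteq> Suc a mod d" using a d4 nx_mod
      by (auto simp: k_def nx_def)
    have "l a (V k) \<noteq> 0" using sg_pos[of a k] a k by auto
    moreover have "l a (V k) = 0"
      using la[of "fst (V k)" "fst (snd (V k))" "snd (snd (V k))"] z by simp
    ultimately show False by simp
  qed
  have "\<exists>q. q \<noteq> (0,0,0) \<and> l a q = 0 \<and> l b q = 0"
  proof (cases "(a2*b3 - a3*b2, a3*b1 - a1*b3, a1*b2 - a2*b1) = (0,0,0)")
    case False
    then show ?thesis
      by (intro exI[of _ "(a2*b3 - a3*b2, a3*b1 - a1*b3, a1*b2 - a2*b1)"]) (simp add: la lb algebra_simps)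
  next
    case True
    then have c: "a2*b3 = a3*b2" "a3*b1 = a1*b3" "a1*b2 = a2*b1" by auto
    show ?thesis
    proof (cases "a2 = 0 \<and> a3 = 0")
      case False
      then show ?thesis using c
        by (intro exI[of _ "(0, -a3, a2)"]) (auto simp: la lb algebra_simps)
    next
      case True
      then have "a1 \<noteq> 0" using anz by auto
      then show ?thesis using c True
        by (intro exI[of _ "(a3, 0, -a1)"]) (auto simp: la lb algebra_simps)
    qed
  qed
  then obtain q where q: "q \<noteq> (0,0,0)" "l a q = 0" "l b q = 0" by blast
  have "l j q \<noteq> 0" if "j < d" "j \<noteq> a" "j \<noteq> b" for j
    using n3 q a b ab that unfolding no_three_concurrent_def by blast
  then show ?thesis using q by blast
qed


definition SS where "SS = {(i,k). 1 \<le> i \<and> i + 2 \<le> k \<and> k < d}"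
definition TT where "TT = {(0::nat,k) | k. 2 \<le> k \<and> k \<le> d - 2}"

lemma SS_sub: "SS \<subseteq> PP" by (force simp: SS_def PP_def)
lemma TT_sub: "TT \<subseteq> PP"
proof
  fix x assume "x \<in> TT"
  then obtain k where "x = (0,k)" "2 \<le> k" "k \<le> d - 2" by (auto simp: TT_def)
  moreover have "k < d" "k \<noteq> d - 1" using calculation d4 by linarith+
  ultimately show "x \<in> PP" by (simp add: PP_def)
qed
lemma PP_split: "PP = SS \<union> TT"
proof
  show "PP \<subseteq> SS \<union> TT"
  proof
    fix x assume "x \<in> PP"
    then obtain i k where x: "x = (i,k)" "i + 2 \<le> k" "k < d" "\<not> (i = 0 \<and> k = d - 1)"
      by (auto simp: PP_def)
    show "x \<in> SS \<union> TT"
    proof (cases "i = 0")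
      case True
      then have "2 \<le> k \<and> k \<le> d - 2" using x by auto
      then show ?thesis using True x by (auto simp: TT_def)
    next
      case False
      then show ?thesis using x by (auto simp: SS_def)
    qed
  qed
  show "SS \<union> TT \<subseteq> PP" using SS_sub TT_sub by auto
qed
lemma ST_disj: "SS \<inter> TT = {}" by (auto simp: TT_def SS_def)
lemma SS_fin: "finite SS" using PP_fin SS_sub finite_subset by blast
lemma TT_fin: "finite TT" using PP_fin TT_sub finite_subset by blast

lemma EE_SS: "y \<in> SS \<Longrightarrow> EE y = {fst y - 1, fst y, snd y - 1, snd y}"
  by (cases y) (simp add: SS_def EE_def pv_def)

lemma mf_zero_iff:
  assumes q: "\<And>j. j < d \<Longrightarrow> l j q = 0 \<longleftrightarrow> (j = a \<or> j = b)" and ab: "a < d" "b < d"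
  shows "mf y q = 0 \<longleftrightarrow> (a \<notin> EE y \<or> b \<notin> EE y)"
  using q ab by (auto simp: mf_def)

lemma tri_indep:
  assumes h: "\<And>p. (\<Sum>y\<in>SS. c y * mf y p) = 0" and x: "x \<in> SS"
  shows "c x = 0"
proof (rule ccontr)
  assume cx: "c x \<noteq> 0"
  define Z where "Z = {y\<in>SS. c y \<noteq> 0}"
  have Zf: "finite Z" using SS_fin by (simp add: Z_def)
  have xZ: "x \<in> Z" using x cx by (simp add: Z_def)
  define i0 where "i0 = Min (fst ` Z)"
  have i0Z: "i0 \<in> fst ` Z" unfolding i0_def using Zf xZ by (intro Min_in) auto
  have i0le: "y \<in> Z \<Longrightarrow> i0 \<le> fst y" for y unfolding i0_def using Zf by (intro Min_le) auto
  define Z1 where "Z1 = {y\<in>Z. fst y = i0}"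
  have Z1f: "finite Z1" using Zf by (simp add: Z1_def)
  have Z1ne: "Z1 \<noteq> {}" using i0Z by (auto simp: Z1_def)
  define k0 where "k0 = Min (snd ` Z1)"
  have k0Z: "k0 \<in> snd ` Z1" unfolding k0_def using Z1f Z1ne by (intro Min_in) auto
  have k0le: "y \<in> Z1 \<Longrightarrow> k0 \<le> snd y" for y unfolding k0_def using Z1f by (intro Min_le) auto
  have x0Z: "(i0,k0) \<in> Z" using k0Z by (auto simp: Z1_def)
  then have x0S: "(i0,k0) \<in> SS" and cx0: "c (i0,k0) \<noteq> 0" by (auto simp: Z_def)
  then have ik: "1 \<le> i0" "i0 + 2 \<le> k0" "k0 < d" by (auto simp: SS_def)
  obtain q where q0: "l (i0 - 1) q = 0" "l (k0 - 1) q = 0"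
    and q1: "\<forall>j<d. j \<noteq> i0 - 1 \<and> j \<noteq> k0 - 1 \<longrightarrow> l j q \<noteq> 0"
  proof -
    have "i0 - 1 < d" "k0 - 1 < d" "i0 - 1 \<noteq> k0 - 1" using ik by auto
    from exq[OF this] show ?thesis using that by blast
  qed
  have qiff: "j < d \<Longrightarrow> l j q = 0 \<longleftrightarrow> (j = i0 - 1 \<or> j = k0 - 1)" for j using q0 q1 by auto
  have mfz: "mf y q = 0 \<longleftrightarrow> (i0 - 1 \<notin> EE y \<or> k0 - 1 \<notin> EE y)" for y
  proof (rule mf_zero_iff)
    show "i0 - 1 < d" "k0 - 1 < d" using ik by auto
  qed (rule qiff)
  have "(\<Sum>y\<in>SS. c y * mf y q) = (\<Sum>y\<in>{(i0,k0)}. c y * mf y q)"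
  proof (rule sum.mono_neutral_right)
    show "finite SS" by (rule SS_fin)
    show "{(i0,k0)} \<subseteq> SS" using x0S by simp
    show "\<forall>y\<in>SS - {(i0, k0)}. c y * mf y q = 0"
    proof
      fix y assume y: "y \<in> SS - {(i0,k0)}"
      show "c y * mf y q = 0"
      proof (cases "c y = 0")
        case False
        then have yZ: "y \<in> Z" using y by (simp add: Z_def)
        have ys: "1 \<le> fst y" "fst y + 2 \<le> snd y" using y by (auto simp: SS_def)
        have EEy: "EE y = {fst y - 1, fst y, snd y - 1, snd y}" using EE_SS y by simp
        have "mf y q = 0"
        proof (cases "fst y = i0")
          case True
          then have "y \<in> Z1" using yZ by (simp add: Z1_def)
          then have "k0 \<le> snd y" by (rule k0le)
          moreover have "y \<noteq> (i0,k0)" using y by simp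
          ultimately have "k0 < snd y" using True by (cases y) auto
          then have "k0 - 1 \<notin> EE y" using EEy True ik ys by auto
          then show ?thesis using mfz by blast
        next
          case False
          then have "i0 < fst y" using i0le yZ by (simp add: le_neq_implies_less)
          then have "i0 - 1 \<notin> EE y" using EEy ik ys by auto
          then show ?thesis using mfz by blast
        qed
        then show ?thesis by simp
      qed simp
    qed
  qed
  also have "\<dots> = c (i0,k0) * mf (i0,k0) q" by simp
  finally have "c (i0,k0) * mf (i0,k0) q = 0" using h by simp
  moreover have "mf (i0,k0) q \<noteq> 0" using mfz EE_SS[OF x0S] by simp
  ultimately show False using cx0 by simp
qed


lemma prod_Hn: "finite A \<Longrightarrow> (\<lambda>p. \<Prod>j\<in>A. l j p) \<in> Hn (card A)"
proof (induct A rule: finite_induct)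
  case empty
  have "(\<lambda>p. \<Prod>j\<in>{}. l j p) = mon 0 (0,0)" by (simp add: fun_eq_iff mon_def)
  then show ?case by (simp add: Hn_def MonI_def FS.span_base)
next
  case (insert j A)
  have "(\<lambda>p. \<Prod>j\<in>insert j A. l j p) = (\<lambda>p. l j p * (\<lambda>p. \<Prod>j\<in>A. l j p) p)"
    using insert by simp
  moreover have "(\<lambda>p. l j p * (\<lambda>p. \<Prod>j\<in>A. l j p) p) \<in> Hn (Suc (card A))"
    by (rule mul_lin[OF well_lin insert(3)])
  ultimately show ?case using insert by simp
qed

lemma card_EE: "x \<in> PP \<Longrightarrow> card (EE x) = 4"
proof -
  assume x: "x \<in> PP"
  obtain i k where xe: "x = (i,k)" by (cases x)
  have ik: "i < d" "k < d" using x xe by (auto simp: PP_def)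
  have dj: "{pv i, i} \<inter> {pv k, k} = {}" using PP_disj x xe by simp
  have "pv i \<noteq> i" "pv k \<noteq> k" using pv_neq ik by auto
  then show ?thesis using dj by (simp add: EE_def xe)
qed

lemma EE_sub: "x \<in> PP \<Longrightarrow> EE x \<subseteq> {0..<d}"
  using pv_lt by (auto simp: EE_def PP_def)

lemma mf_Hn: "x \<in> PP \<Longrightarrow> mf x \<in> Hn (d - 4)"
proof -
  assume x: "x \<in> PP"
  have "card ({0..<d} - EE x) = d - 4"
    using card_EE[OF x] EE_sub[OF x] by (simp add: card_Diff_subset finite_subset)
  then show ?thesis using prod_Hn[of "{0..<d} - EE x"] by (simp add: mf_def[abs_def])
qed

lemma card_SS: "card SS = card (MonI (d - 4))"
proof (rule bij_betw_same_card[of "\<lambda>(i,k). (i - 1, k - i - 2)"])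
  show "bij_betw (\<lambda>(i,k). (i - 1, k - i - 2)) SS (MonI (d - 4))"
  proof (rule bij_betw_byWitness[of _ "\<lambda>(a,b). (a + 1, a + b + 3)"])
    show "\<forall>x\<in>SS. (\<lambda>(a,b). (a + 1, a + b + 3)) ((\<lambda>(i,k). (i - 1, k - i - 2)) x) = x"
      by (auto simp: SS_def)
    show "\<forall>y\<in>MonI (d - 4). (\<lambda>(i,k). (i - 1, k - i - 2)) ((\<lambda>(a,b). (a + 1, a + b + 3)) y) = y"
      by (auto simp: MonI_def)
    show "(\<lambda>(i,k). (i - 1, k - i - 2)) ` SS \<subseteq> MonI (d - 4)"
      by (auto simp: SS_def MonI_def)
    show "(\<lambda>(a,b). (a + 1, a + b + 3)) ` MonI (d - 4) \<subseteq> SS"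
      using d4 by (auto simp: SS_def MonI_def)
  qed
qed

lemma sum_two: fixes f :: "_ \<Rightarrow> 'b::comm_ring_1" shows "finite A \<Longrightarrow> (\<Sum>z\<in>A. ((if z = x then 1 else 0) - (if z = y then 1 else 0)) * f z) =
   (if x \<in> A then f x else 0) - (if y \<in> A then f y else 0)"
proof -
  assume fA: "finite A"
  have "(\<Sum>z\<in>A. ((if z = x then 1 else 0) - (if z = y then 1 else 0)) * f z) =
     (\<Sum>z\<in>A. (if z = x then f z else 0) - (if z = y then f z else 0))"
    by (rule sum.cong) auto
  also have "\<dots> = (\<Sum>z\<in>A. (if z = x then f z else 0)) - (\<Sum>z\<in>A. (if z = y then f z else 0))"
    by (rule sum_subtractf)
  also have "\<dots> = (if x \<in> A then f x else 0) - (if y \<in> A then f y else 0)"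
    using fA by (simp add: sum.delta)
  finally show ?thesis .
qed

lemma mf_inj: "inj_on mf SS"
proof
  fix x y assume x: "x \<in> SS" and y: "y \<in> SS" and e: "mf x = mf y"
  show "x = y"
  proof (rule ccontr)
    assume ne: "x \<noteq> y"
    define c where "c z = (if z = x then 1 else 0) - (if z = y then (1::'a) else 0)" for z
    have "(\<Sum>z\<in>SS. c z * mf z p) = 0" for p
      unfolding c_def sum_two[OF SS_fin] using x y e by simp
    then have "c x = 0" using tri_indep x by blast
    then show False using ne by (simp add: c_def)
  qed
qed

lemma B_indep: "FS.independent (mf ` SS)"
proof (rule FS.independent_if_scalars_zero)
  show "finite (mf ` SS)" using SS_fin by simp
next
  fix f x assume h: "(\<Sum>x\<in>mf ` SS. fsc (f x) x) = 0" and x: "x \<in> mf ` SS"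
  have "(\<Sum>x\<in>mf ` SS. fsc (f x) x) = (\<Sum>s\<in>SS. fsc (f (mf s)) (mf s))"
    by (rule sum.reindex[OF mf_inj, unfolded comp_def])
  then have "(\<Sum>s\<in>SS. fsc (f (mf s)) (mf s)) = 0" using h by simp
  then have "(\<Sum>s\<in>SS. fsc (f (mf s)) (mf s)) p = 0" for p by simp
  then have "(\<Sum>s\<in>SS. f (mf s) * mf s p) = 0" for p
    by (simp only: sum_fun_apply fsc_def)
  then show "f x = 0" using tri_indep[of "\<lambda>s. f (mf s)"] x by auto
qed

abbreviation H4 where "H4 \<equiv> (Hn (d - 4) :: ('a \<times> 'a \<times> 'a \<Rightarrow> 'a) set)"

lemma Hn_span_B: "H4 \<subseteq> FS.span (mf ` SS)"
proof -
  have sub: "mf ` SS \<subseteq> H4" using mf_Hn SS_sub by auto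
  have c1: "card (mf ` SS) = card SS" using card_image[OF mf_inj] .
  obtain C where C: "mf ` SS \<subseteq> C" "C \<subseteq> H4" "FS.independent C" "H4 \<subseteq> FS.span C"
    using FS.maximal_independent_subset_extend[OF sub B_indep] by blast
  let ?M = "(mon (d - 4) :: _ \<Rightarrow> 'a \<times> 'a \<times> 'a \<Rightarrow> 'a) ` MonI (d - 4)"
  have "C \<subseteq> FS.span ?M" using C(2) by (simp add: Hn_def)
  then have fc: "finite C \<and> card C \<le> card ?M"
    using FS.independent_span_bound[of ?M C] C(3) MonI_fin by blast
  have "card ?M \<le> card (MonI (d - 4))" by (rule card_image_le[OF MonI_fin])
  then have "card C \<le> card (mf ` SS)" using c1 card_SS fc by simp
  then have "mf ` SS = C" using C(1) fc card_subset_eq[of C "mf ` SS"] card_mono[of C "mf ` SS"]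
    by (metis antisym card_mono)
  then show ?thesis using C(4) by simp
qed

lemma rep_TT: "t \<in> TT \<Longrightarrow> \<exists>r. \<forall>p. mf t p = (\<Sum>s\<in>SS. r s * mf s p)"
proof -
  assume t: "t \<in> TT"
  then have "t \<in> PP" using TT_sub by auto
  then have "mf t \<in> Hn (d - 4)" by (rule mf_Hn)
  then have "mf t \<in> FS.span (mf ` SS)" using Hn_span_B by blast
  then obtain u where "mf t = (\<Sum>v\<in>mf ` SS. fsc (u v) v)"
    using FS.span_finite[of "mf ` SS"] SS_fin by auto
  also have "\<dots> = (\<Sum>s\<in>SS. fsc (u (mf s)) (mf s))"
    by (rule sum.reindex[OF mf_inj, unfolded comp_def])
  finally have "mf t p = (\<Sum>s\<in>SS. fsc (u (mf s)) (mf s)) p" for p by simp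
  then have "mf t p = (\<Sum>s\<in>SS. u (mf s) * mf s p)" for p
    by (simp only: sum_fun_apply fsc_def)
  then show ?thesis by (intro exI[of _ "\<lambda>s. u (mf s)"]) auto
qed


definition RR where "RR t = (SOME r. \<forall>p. mf t p = (\<Sum>s\<in>SS. r s * mf s p))"

lemma RR: "t \<in> TT \<Longrightarrow> mf t p = (\<Sum>s\<in>SS. RR t s * mf s p)"
  using someI_ex[OF rep_TT] unfolding RR_def by blast

lemma aa_nz: "x \<in> PP \<Longrightarrow> aa x \<noteq> 0"
  using alpha_nz by (auto simp: aa_def PP_def)

definition Qb where "Qb t x = (if x = t then 1 else if x \<in> SS then - (RR t x * aa t / aa x) else 0)"

lemma Qb_TT: "t \<in> TT \<Longrightarrow> x \<in> TT \<Longrightarrow> Qb t x = (if x = t then 1 else 0)"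
  using ST_disj by (auto simp: Qb_def)

lemma Phi_split: "Phi Q p = (\<Sum>x\<in>SS. (Q x * aa x) * mf x p) + (\<Sum>x\<in>TT. (Q x * aa x) * mf x p)"
  unfolding Phi_def PP_split by (rule sum.union_disjoint) (use SS_fin TT_fin ST_disj in auto)

lemma Phi_Qb: assumes t: "t \<in> TT" shows "Phi (Qb t) p = 0"
proof -
  have tS: "t \<notin> SS" using t ST_disj by auto
  have a: "(\<Sum>x\<in>TT. (Qb t x * aa x) * mf x p) = aa t * mf t p"
  proof -
    have "(\<Sum>x\<in>TT. (Qb t x * aa x) * mf x p) = (\<Sum>x\<in>TT. if x = t then aa t * mf t p else 0)"
      by (rule sum.cong) (auto simp: Qb_TT t)
    also have "\<dots> = aa t * mf t p" using t TT_fin by (simp add: sum.delta)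
    finally show ?thesis .
  qed
  have b: "(\<Sum>x\<in>SS. (Qb t x * aa x) * mf x p) = - (aa t * mf t p)"
  proof -
    have "(\<Sum>x\<in>SS. (Qb t x * aa x) * mf x p) = (\<Sum>x\<in>SS. - (aa t * (RR t x * mf x p)))"
    proof (rule sum.cong)
      fix x assume x: "x \<in> SS"
      then have "x \<in> PP" using SS_sub by auto
      then have "aa x \<noteq> 0" by (rule aa_nz)
      moreover have "x \<noteq> t" using x tS by auto
      ultimately show "(Qb t x * aa x) * mf x p = - (aa t * (RR t x * mf x p))"
        using x by (simp add: Qb_def field_simps)
    qed simp
    also have "\<dots> = - (aa t * mf t p)"
      using RR[OF t, of p] by (simp add: sum_negf sum_distrib_left)
    finally show ?thesis .
  qed
  show ?thesis using a b Phi_split[of "Qb t" p] by simp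
qed

lemma Qb_in: "t \<in> TT \<Longrightarrow> Qb t \<in> IW2 v d"
  unfolding IW2_char using Phi_Qb TT_sub SS_sub by (auto simp: Qb_def)

lemma Qb_inj: "inj_on Qb TT"
proof
  fix t t' assume t: "t \<in> TT" and t': "t' \<in> TT" and e: "Qb t = Qb t'"
  have "Qb t t = 1" using Qb_TT t by simp
  then have "Qb t' t = 1" using e by simp
  then show "t = t'" using Qb_TT[OF t' t] by (auto split: if_splits)
qed

lemma card_TT: "card TT = d - 3"
proof -
  have "TT = (\<lambda>k. (0::nat, k)) ` {2..d-2}" by (auto simp: TT_def)
  moreover have "inj_on (\<lambda>k. (0::nat, k)) {2..d-2}" by (auto simp: inj_on_def)
  ultimately have "card TT = card {2..d-2}" by (simp add: card_image)
  also have "\<dots> = d - 3" using d4 by simp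
  finally show ?thesis .
qed

lemma cs_apply: "(\<Sum>t\<in>A. coeff_scale (c t) (f t)) x = (\<Sum>t\<in>A. c t * f t x)"
  by (simp add: sum_fun_apply coeff_scale_def)

lemma B'_indep: "CS.independent (Qb ` TT)"
proof (rule CS.independent_if_scalars_zero)
  show "finite (Qb ` TT)" using TT_fin by simp
next
  fix f x assume h: "(\<Sum>x\<in>Qb ` TT. coeff_scale (f x) x) = 0" and x: "x \<in> Qb ` TT"
  obtain t0 where t0: "t0 \<in> TT" "x = Qb t0" using x by auto
  have "(\<Sum>x\<in>Qb ` TT. coeff_scale (f x) x) = (\<Sum>t\<in>TT. coeff_scale (f (Qb t)) (Qb t))"
    by (rule sum.reindex[OF Qb_inj, unfolded comp_def])
  then have "(\<Sum>t\<in>TT. coeff_scale (f (Qb t)) (Qb t)) t0 = 0" using h by simp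
  then have "(\<Sum>t\<in>TT. f (Qb t) * Qb t t0) = 0" by (simp only: cs_apply)
  moreover have "(\<Sum>t\<in>TT. f (Qb t) * Qb t t0) = (\<Sum>t\<in>TT. if t = t0 then f (Qb t) else 0)"
    by (rule sum.cong) (auto simp: Qb_TT t0)
  moreover have "\<dots> = f (Qb t0)" using t0 TT_fin by (simp add: sum.delta')
  ultimately show "f x = 0" using t0 by simp
qed

lemma IW_span: "IW2 v d \<subseteq> CS.span (Qb ` TT)"
proof
  fix Q assume Q: "Q \<in> IW2 v d"
  define y where "y = (\<Sum>t\<in>TT. coeff_scale (Q t) (Qb t))"
  have yspan: "y \<in> CS.span (Qb ` TT)" unfolding y_def
    by (intro CS.span_sum CS.span_scale CS.span_base) auto
  have yx: "y x = (\<Sum>t\<in>TT. Q t * Qb t x)" for x unfolding y_def by (rule cs_apply)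
  have Qs: "x \<notin> PP \<Longrightarrow> Q x = 0" for x using Q IW2_char by blast
  have QP: "Phi Q p = 0" for p using Q IW2_char by blast
  define Rf where "Rf x = Q x - y x" for x
  have RT: "x \<in> TT \<Longrightarrow> Rf x = 0" for x
  proof -
    assume x: "x \<in> TT"
    have "y x = (\<Sum>t\<in>TT. if t = x then Q t else 0)"
      unfolding yx by (rule sum.cong) (auto simp: Qb_TT x)
    also have "\<dots> = Q x" using x TT_fin by (simp add: sum.delta')
    finally show ?thesis by (simp add: Rf_def)
  qed
  have RP: "x \<notin> PP \<Longrightarrow> Rf x = 0" for x
  proof -
    assume x: "x \<notin> PP"
    then have "x \<notin> SS" "x \<notin> TT" using SS_sub TT_sub by auto
    then have "\<forall>t\<in>TT. Q t * Qb t x = 0" by (auto simp: Qb_def)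
    then have "y x = 0" unfolding yx by (rule sum.neutral)
    then show ?thesis using Qs[OF x] by (simp add: Rf_def)
  qed
  have PhiR: "Phi Rf p = 0" for p
  proof -
    have "Phi Rf p = Phi Q p - (\<Sum>t\<in>TT. Q t * Phi (Qb t) p)"
      unfolding Phi_def Rf_def yx
      by (simp add: algebra_simps sum_subtractf sum_distrib_left sum_distrib_right sum.swap[of _ TT PP])
    then show ?thesis using QP Phi_Qb by simp
  qed
  have RS: "x \<in> SS \<Longrightarrow> Rf x = 0" for x
  proof -
    assume x: "x \<in> SS"
    have "(\<Sum>x\<in>SS. (Rf x * aa x) * mf x p) = 0" for p
      using PhiR[of p] Phi_split[of Rf p] RT by simp
    then have "Rf x * aa x = 0" using tri_indep[of "\<lambda>x. Rf x * aa x"] x by blast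
    moreover have "aa x \<noteq> 0" using aa_nz[of x] x SS_sub by blast
    ultimately show ?thesis by simp
  qed
  have "Q = y"
  proof
    fix x
    have "Rf x = 0" using RT RP RS PP_split by blast
    then show "Q x = y x" by (simp add: Rf_def)
  qed
  then show "Q \<in> CS.span (Qb ` TT)" using yspan by simp
qed

theorem main: "CS.dim (IW2 v d) = d - 3"
proof (rule CS.dim_unique)
  show "Qb ` TT \<subseteq> IW2 v d" using Qb_in by auto
  show "IW2 v d \<subseteq> CS.span (Qb ` TT)" by (rule IW_span)
  show "CS.independent (Qb ` TT)" by (rule B'_indep)
  show "card (Qb ` TT) = d - 3" using card_image[OF Qb_inj] card_TT by simp
qed

end

theorem lemma3p5:
  fixes v :: "nat \<Rightarrow> 'a::linordered_field \<times> 'a" and d :: nat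
  assumes "4 \<le> d"
    and "convex_polygon v d"
    and "no_three_concurrent v d"
  shows "vector_space.dim coeff_scale (IW2 v d) = d - 3"
proof -
  interpret wach v d using assms by unfold_locales
  show ?thesis by (rule main)
qed

end
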